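(* Let $\ell$ be an odd prime and $N\ge1$. For integers $k\ge0$ and $0\le v<\ell^N$, $$\sum_{\substack{k'\ge0\\ k'\equiv v\ (\mathrm{mod}\ \ell^N)}}(-1)^{k'}\binom{\ell^N+2k-2}{k'}\equiv\begin{cases} v+1\pmod{\ell} & (k=0)\\ 0\pmod{\ell} & (k>0).\end{cases}$$
   Context: $\binom{m}{k'}=0$ for $k'>m$. *)

theory Defs
  imports "HOL-Number_Theory.Number_Theory"
begin

end

theory Submission
  imports Defs
begin

lemma dvdA:
  fixes l N j :: nat
  assumes "prime l" "0 < j" "j < l ^ N"
  shows "l dvd (l ^ N choose j)"
proof (rule ccontr)
  assume nd: "\<not> l dvd (l ^ N choose j)"
  have q0: "l ^ N > 0" using assms prime_gt_0_nat by simp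
  obtain m where m: "l ^ N = Suc m" using q0 by (cases "l^N") auto
  obtain i where i: "j = Suc i" using assms(2) by (cases j) auto
  have "Suc m * (m choose i) = (Suc m choose Suc i) * Suc i" by (rule Suc_times_binomial_eq)
  hence "l ^ N dvd (l ^ N choose j) * j" using m i by (metis dvd_triv_left)
  moreover have "coprime (l ^ N) (l ^ N choose j)"
    using nd assms(1) by (simp add: prime_imp_coprime coprime_commute)
  ultimately have "l ^ N dvd j" by (metis coprime_dvd_mult_right_iff)
  thus False using assms(2,3) by (simp add: nat_dvd_not_less)
qed

lemma lemB:
  fixes l N n r :: nat
  assumes "prime l" "N \<ge> 1"
  shows "l dvd ((l^N + n) choose r) - ((n choose r) + (if l^N \<le> r then (n choose (r - l^N)) else 0))"
    and "(n choose r) + (if l^N \<le> r then (n choose (r - l^N)) else 0) \<le> ((l^N + n) choose r)"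
proof -
  define q where "q = l ^ N"
  have q0: "q > 0" using assms prime_gt_0_nat q_def by simp
  define f where "f j = (q choose j) * (n choose (r - j))" for j
  define T where "T = {..r} - {0, q}"
  have fT: "finite T" unfolding T_def by simp
  have sumeq: "(\<Sum>j\<le>r. f j) = f 0 + (if q \<le> r then f q else 0) + sum f T"
  proof (cases "q \<le> r")
    case True
    have "{..r} = insert 0 (insert q T)" using True unfolding T_def by auto
    moreover have "0 \<notin> insert q T" "q \<notin> T" using q0 unfolding T_def by auto
    ultimately show ?thesis using True fT by (simp add: sum.insert)
  next
    case False
    have "{..r} = insert 0 T" using False unfolding T_def by auto
    moreover have "0 \<notin> T" unfolding T_def by auto
    ultimately show ?thesis using False fT by (simp add: sum.insert)
  qed
  have dT: "l dvd sum f T"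
  proof (rule dvd_sum)
    fix j assume "j \<in> T"
    hence j: "j \<noteq> 0" "j \<noteq> q" unfolding T_def by auto
    show "l dvd f j"
    proof (cases "j < q")
      case True
      thus ?thesis using dvdA[OF assms(1), of j N] j unfolding f_def q_def by simp
    next
      case False
      hence "q < j" using j by simp
      thus ?thesis unfolding f_def by (simp add: binomial_eq_0)
    qed
  qed
  have V: "(\<Sum>j\<le>r. f j) = (q + n) choose r" unfolding f_def by (rule vandermonde)
  have fq: "f 0 + (if q \<le> r then f q else 0) = (n choose r) + (if q \<le> r then (n choose (r - q)) else 0)"
    unfolding f_def by simp
  define M where "M = (n choose r) + (if q \<le> r then (n choose (r - q)) else 0)"
  have e: "(q + n) choose r = M + sum f T" using V sumeq fq unfolding M_def by simp
  have "l dvd ((q + n) choose r) - M" using e dT by simp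
  thus "l dvd ((l^N + n) choose r) - ((n choose r) + (if l^N \<le> r then (n choose (r - l^N)) else 0))"
    unfolding M_def q_def .
  have "M \<le> (q + n) choose r" using e by simp
  thus "(n choose r) + (if l^N \<le> r then (n choose (r - l^N)) else 0) \<le> ((l^N + n) choose r)"
    unfolding M_def q_def .
qed

lemma lemC:
  fixes l N n v :: nat
  assumes "prime l" "odd l" "N \<ge> 1"
  shows "int l dvd (\<Sum>k' \<in> {k'. k' \<le> l ^ N + n \<and> [k' = v] (mod l ^ N)}.
             (-1::int) ^ k' * int ((l ^ N + n) choose k'))"
proof -
  define q where "q = l ^ N"
  have q0: "q > 0" using assms prime_gt_0_nat q_def by simp
  have oq: "odd q" using assms unfolding q_def by simp
  define A where "A = {k'. k' \<le> q + n \<and> [k' = v] (mod q)}"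
  define B where "B = {k'. k' \<le> n \<and> [k' = v] (mod q)}"
  define A2 where "A2 = {k'\<in>A. q \<le> k'}"
  define g where "g k' = (-1::int) ^ k' * int (n choose k')" for k'
  define h where "h k' = (if q \<le> k' then (-1::int) ^ k' * int (n choose (k' - q)) else 0)" for k'
  have fA: "finite A" unfolding A_def by simp
  have fB: "finite B" unfolding B_def by simp
  have step: "int l dvd (-1::int) ^ k' * int ((q + n) choose k') - (g k' + h k')" for k'
  proof -
    define M where "M = (n choose k') + (if q \<le> k' then (n choose (k' - q)) else 0)"
    have d: "l dvd ((q + n) choose k') - M" and le: "M \<le> (q + n) choose k'"
      using lemB[OF assms(1) assms(3), of n k'] unfolding M_def q_def by auto
    have "int l dvd int (((q + n) choose k') - M)" using d by (simp only: int_dvd_int_iff)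
    hence "int l dvd int ((q + n) choose k') - int M" using le by (simp add: of_nat_diff)
    hence "int l dvd (-1::int) ^ k' * (int ((q + n) choose k') - int M)" by (rule dvd_mult)
    moreover have "(-1::int) ^ k' * (int ((q + n) choose k') - int M) = (-1::int) ^ k' * int ((q + n) choose k') - (g k' + h k')"
      unfolding M_def g_def h_def by (simp add: algebra_simps)
    ultimately show ?thesis by simp
  qed
  have s1: "int l dvd (\<Sum>k'\<in>A. (-1::int) ^ k' * int ((q + n) choose k') - (g k' + h k'))"
    by (rule dvd_sum) (rule step)
  have gAB: "sum g A = sum g B"
  proof (rule sum.mono_neutral_right[OF fA])
    show "B \<subseteq> A" unfolding A_def B_def by auto
    show "\<forall>i\<in>A - B. g i = 0" unfolding A_def B_def g_def by (auto simp: binomial_eq_0)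
  qed
  have hA: "sum h A = sum h A2"
  proof (rule sum.mono_neutral_right[OF fA])
    show "A2 \<subseteq> A" unfolding A2_def by auto
    show "\<forall>i\<in>A - A2. h i = 0" unfolding A2_def h_def by auto
  qed
  have img: "A2 = (\<lambda>j. j + q) ` B"
  proof
    show "(\<lambda>j. j + q) ` B \<subseteq> A2" unfolding A2_def A_def B_def by (auto simp: cong_def)
    show "A2 \<subseteq> (\<lambda>j. j + q) ` B"
    proof
      fix x assume x: "x \<in> A2"
      hence "x - q \<in> B" "x = (x - q) + q"
        unfolding A2_def A_def B_def using q0 by (auto simp: cong_def le_mod_geq)
      thus "x \<in> (\<lambda>j. j + q) ` B" by (metis image_eqI)
    qed
  qed
  have hA2: "sum h A2 = - sum g B"
  proof -
    have "sum h A2 = sum (h \<circ> (\<lambda>j. j + q)) B" unfolding img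
      by (rule sum.reindex) (simp add: inj_on_def)
    also have "\<dots> = sum (\<lambda>j. - g j) B"
      by (rule sum.cong) (auto simp: h_def g_def power_add oq)
    finally show ?thesis by (simp add: sum_negf)
  qed
  have "(\<Sum>k'\<in>A. (-1::int) ^ k' * int ((q + n) choose k') - (g k' + h k'))
      = (\<Sum>k'\<in>A. (-1::int) ^ k' * int ((q + n) choose k')) - (sum g A + sum h A)"
    by (simp add: sum_subtractf sum.distrib)
  also have "sum g A + sum h A = 0" using gAB hA hA2 by simp
  finally have "int l dvd (\<Sum>k'\<in>A. (-1::int) ^ k' * int ((q + n) choose k'))" using s1 by simp
  thus ?thesis unfolding A_def q_def .
qed

lemma lemD:
  fixes l N v :: nat
  assumes "prime l" "N \<ge> 1" "v \<le> l ^ N - 1"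
  shows "int l dvd (-1::int) ^ v * int ((l ^ N - 1) choose v) - 1"
  using assms(3)
proof (induction v)
  case 0
  then show ?case by simp
next
  case (Suc v)
  define q where "q = l ^ N"
  have q0: "q > 1" using one_less_power[of l N] prime_gt_1_nat[OF assms(1)] assms(2) unfolding q_def by simp
  have p: "q choose Suc v = ((q - 1) choose Suc v) + ((q - 1) choose v)"
  proof -
    have "q = Suc (q - 1)" using q0 by simp
    hence "q choose Suc v = Suc (q - 1) choose Suc v" by simp
    also have "\<dots> = ((q - 1) choose Suc v) + ((q - 1) choose v)" by (simp add: binomial_Suc_Suc)
    finally show ?thesis .
  qed
  have "l dvd q choose Suc v" using dvdA[OF assms(1), of "Suc v" N] Suc.prems unfolding q_def by auto
  hence "int l dvd int ((q - 1) choose Suc v) + int ((q - 1) choose v)"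
    using p by (metis int_dvd_int_iff of_nat_add)
  hence a: "int l dvd (-1::int) ^ Suc v * (int ((q - 1) choose Suc v) + int ((q - 1) choose v))"
    by (rule dvd_mult)
  have b: "int l dvd (-1::int) ^ v * int ((q - 1) choose v) - 1" using Suc unfolding q_def by simp
  have "(-1::int) ^ Suc v * int ((q - 1) choose Suc v) - 1 =
     (-1::int) ^ Suc v * (int ((q - 1) choose Suc v) + int ((q - 1) choose v)) + ((-1::int) ^ v * int ((q - 1) choose v) - 1)"
    by (simp add: algebra_simps)
  then show ?case using a b unfolding q_def by (metis dvd_add)
qed

lemma lemE:
  fixes l N v :: nat
  assumes "prime l" "N \<ge> 1" "v \<le> l ^ N - 2"
  shows "int l dvd (-1::int) ^ v * int ((l ^ N - 2) choose v) - (int v + 1)"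
  using assms(3)
proof (induction v)
  case 0
  then show ?case by simp
next
  case (Suc v)
  define q where "q = l ^ N"
  have q0: "q > 1" using one_less_power[of l N] prime_gt_1_nat[OF assms(1)] assms(2) unfolding q_def by simp
  have p: "(q - 1) choose Suc v = ((q - 2) choose Suc v) + ((q - 2) choose v)"
  proof -
    have "q - 1 = Suc (q - 2)" using q0 by simp
    hence "(q - 1) choose Suc v = Suc (q - 2) choose Suc v" by simp
    also have "\<dots> = ((q - 2) choose Suc v) + ((q - 2) choose v)" by (simp add: binomial_Suc_Suc)
    finally show ?thesis .
  qed
  have a: "int l dvd (-1::int) ^ Suc v * int ((q - 1) choose Suc v) - 1"
    using lemD[OF assms(1,2), of "Suc v"] Suc.prems unfolding q_def by simp
  have b: "int l dvd (-1::int) ^ v * int ((q - 2) choose v) - (int v + 1)" using Suc unfolding q_def by simp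
  have "(-1::int) ^ Suc v * int ((q - 2) choose Suc v) - (int (Suc v) + 1) =
     ((-1::int) ^ Suc v * int ((q - 1) choose Suc v) - 1) + ((-1::int) ^ v * int ((q - 2) choose v) - (int v + 1))"
    unfolding p by (simp add: algebra_simps)
  then show ?case using a b unfolding q_def by (metis dvd_add)
qed

theorem mainTheorem12:
  fixes l N k v :: nat
  assumes "prime l" and "odd l" and "N \<ge> 1" and "v < l ^ N"
  shows "[(\<Sum>k' \<in> {k'. k' \<le> l ^ N + 2 * k - 2 \<and> [k' = v] (mod l ^ N)}.
             (-1::int) ^ k' * int ((l ^ N + 2 * k - 2) choose k'))
          = (if k = 0 then int v + 1 else 0)] (mod int l)"
proof (cases "k = 0")
  case False
  have e: "l ^ N + 2 * k - 2 = l ^ N + (2 * k - 2)" using False by simp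
  show ?thesis using lemC[OF assms(1-3), of "2 * k - 2" v] False unfolding e
    by (simp add: cong_0_iff)
next
  case True
  define q where "q = l ^ N"
  have l3: "l \<ge> 3" using assms(1,2) prime_ge_2_nat
    by (metis dvd_refl le_antisym not_less_eq_eq numeral_2_eq_2 numeral_3_eq_3 prime_gt_1_nat)
  have "l \<le> q" using assms(3) l3 unfolding q_def
    by (metis One_nat_def le_trans power_increasing power_one_right less_imp_le_nat Suc_le_eq zero_less_numeral le_SucE)
  hence q3: "q \<ge> 3" using l3 by simp
  show ?thesis
  proof (cases "v \<le> q - 2")
    case vle: True
    have S: "{k'. k' \<le> q - 2 \<and> [k' = v] (mod q)} = {v}"
    proof -
      have "k' = v" if "k' \<le> q - 2" "[k' = v] (mod q)" for k'
        using that vle q3 by (auto simp: cong_def)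
      thus ?thesis using vle by auto
    qed
    show ?thesis using lemE[OF assms(1,3), of v] vle True S unfolding q_def
      by (simp add: cong_iff_dvd_diff)
  next
    case vgt: False
    have S: "{k'. k' \<le> q - 2 \<and> [k' = v] (mod q)} = {}"
    proof -
      have False if "k' \<le> q - 2" "[k' = v] (mod q)" for k'
        using that vgt q3 assms(4) unfolding q_def[symmetric] by (auto simp: cong_def)
      thus ?thesis by auto
    qed
    have "v = q - 1" using vgt assms(4) unfolding q_def by simp
    hence "int v + 1 = int q" using q3 by simp
    hence "int l dvd int v + 1" unfolding q_def using assms(3)
      by (simp add: dvd_power)
    have S': "{k'. k' \<le> l^N + 2*k - 2 \<and> [k' = v] (mod l^N)} = {}" using S True unfolding q_def by simp
    show ?thesis unfolding S' using True \<open>int l dvd int v + 1\<close> dvd_minus_iff[of "int l" "int v + 1"]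
      by (simp add: cong_iff_dvd_diff)
  qed
qed

end
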